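(* Let $a,b$ be positive integers with $\gcd(a,b)=1$. For all $\pi\in\mathcal{D}_{b,-a}(a,b)$, $\widetilde\rho(\tilde f(\pi))=\rho_{\mathrm{AHJ}}(f(\pi))$.
   Context: Partitions are drawn in English convention in the first quadrant; a partition fitting in the $a\times b$ rectangle has as frontier a lattice path from $(0,0)$ to $(b,a)$ with unit north (N) and east (E) steps, its diagram being the unit squares above and to the left of the path. For a word $u$ with finitely many N's, $\mathrm{ptn}(u)$ is the partition whose parts are, for each N of $u$, the number of E's preceding it (zero parts discarded). The hook-length of a cell $c$ is the number of cells among $c$, the cells below it in its column and those to its right in its row. The $(b,-a)$-level of a lattice point $(x,y)$ is $by-ax$; a unit square $[x,x+1]\times[y,y+1]$ has the level of its southeast corner. Under the west-south convention, a step gets the level of its starting point. $\mathcal{D}_{b,-a}(a,b)$ is the set of partitions with at most $a$ parts, each at most $b$, whose frontier path visits only points of nonnegative level. For $\pi\in\mathcal{D}_{b,-a}(a,b)$ let $L(\pi)$ be the set of levels of unit squares lying above the line $by=ax$ and below the frontier path of $\pi$ (distinct positive integers). $f(\pi)$ is the unique partition whose first-column hook-lengths are exactly the elements of $L(\pi)$. Let $z=z_0z_1\cdots$ with $z_0=\mathrm{E}$ and, for $i>0$, $z_i=\mathrm{N}$ iff $i\in L(\pi)$ (else $\mathrm{E}$); $\tilde f(\pi)=\mathrm{ptn}(z)$. Let $y$ be the subword of $z$ of those $z_i$ ($i\ge0$) such that $i+a$ is the west-south level of some step of the frontier path of $\pi$; $\widetilde\rho(\tilde f(\pi))=\mathrm{ptn}(y)$.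 $\rho_{\mathrm{AHJ}}(f(\pi))$ is the partition having one row for each row of $\nu=f(\pi)$ whose first-column hook-length equals the level of a square lying directly east of a north step of the frontier path of $\pi$ (the square $[x,x+1]\times[y,y+1]$ for a north step from $(x,y)$ to $(x,y+1)$), that row having length equal to the number of cells in the corresponding row of $\nu$ with hook-length at most $b$. *)

theory Defs
  imports Main
begin

(* Words in the letters N and E are bool lists/functions: True = N (north), False = E (east). *)

definition is_partition :: "nat list \<Rightarrow> bool" where
  "is_partition xs \<longleftrightarrow> sorted (rev xs) \<and> 0 \<notin> set xs"

definition normalize :: "nat list \<Rightarrow> nat list" where
  "normalize xs = rev (sort (filter (\<lambda>p. 0 < p) xs))"

definition ptn :: "bool list \<Rightarrow> nat list" where
  "ptn w = normalize (map (\<lambda>k. length (filter Not (take k w)))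
                          (filter (\<lambda>k. w ! k) [0..<length w]))"

(* ptn(u) for an infinite word with finitely many N's (E's after the last N are irrelevant) *)
definition ptn_inf :: "(nat \<Rightarrow> bool) \<Rightarrow> nat list" where
  "ptn_inf u = ptn (map u [0..<Suc (Max {i. u i})])"

definition padded :: "nat \<Rightarrow> nat list \<Rightarrow> nat list" where
  "padded a \<pi> = \<pi> @ replicate (a - length \<pi>) 0"

fun fr :: "nat \<Rightarrow> nat \<Rightarrow> nat list \<Rightarrow> bool list" where
  "fr b p [] = replicate (b - p) False"
| "fr b p (x # xs) = replicate (x - p) False @ True # fr b x xs"

(* frontier path from (0,0) to (b,a) of a partition in the a x b rectangle (English convention,
   first row on top): rows are traversed bottom to top *)
definition frontier :: "nat \<Rightarrow> nat \<Rightarrow> nat list \<Rightarrow> bool list" where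
  "frontier a b \<pi> = fr b 0 (rev (padded a \<pi>))"

definition point :: "bool list \<Rightarrow> nat \<Rightarrow> nat \<times> nat" where
  "point w k = (length (filter Not (take k w)), length (filter id (take k w)))"

definition level :: "nat \<Rightarrow> nat \<Rightarrow> nat \<times> nat \<Rightarrow> int" where
  "level a b P = int b * int (snd P) - int a * int (fst P)"

(* level of the unit square [x,x+1] x [y,y+1]: level of its southeast corner *)
definition sq_level :: "nat \<Rightarrow> nat \<Rightarrow> nat \<times> nat \<Rightarrow> int" where
  "sq_level a b S = level a b (Suc (fst S), snd S)"

definition Dset :: "nat \<Rightarrow> nat \<Rightarrow> nat list set" where
  "Dset a b = {\<pi>. is_partition \<pi> \<and> length \<pi> \<le> a \<and> (\<forall>p\<in>set \<pi>. p \<le> b) \<and>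
       (\<forall>k \<le> length (frontier a b \<pi>). 0 \<le> level a b (point (frontier a b \<pi>) k))}"

(* unit square [x,x+1]x[y,y+1] of the rectangle belongs to the diagram of \<pi>:
   its row (counted from the top, 0-based) is a-1-y *)
definition in_diagram :: "nat \<Rightarrow> nat list \<Rightarrow> nat \<times> nat \<Rightarrow> bool" where
  "in_diagram a \<pi> S \<longleftrightarrow> fst S < padded a \<pi> ! (a - 1 - snd S)"

definition Lset :: "nat \<Rightarrow> nat \<Rightarrow> nat list \<Rightarrow> nat set" where
  "Lset a b \<pi> = {nat (sq_level a b (x, y)) | x y. x < b \<and> y < a \<and>
       \<not> in_diagram a \<pi> (x, y) \<and> 0 < sq_level a b (x, y)}"

definition conj :: "nat list \<Rightarrow> nat \<Rightarrow> nat" where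
  "conj \<nu> j = length (filter (\<lambda>p. j < p) \<nu>)"

(* hook length of cell in row i, column j (both 0-based; requires j < \<nu>!i) *)
definition hook :: "nat list \<Rightarrow> nat \<Rightarrow> nat \<Rightarrow> nat" where
  "hook \<nu> i j = (\<nu> ! i - j) + (conj \<nu> j - i) - 1"

definition first_col_hooks :: "nat list \<Rightarrow> nat list" where
  "first_col_hooks \<nu> = map (\<lambda>i. hook \<nu> i 0) [0..<length \<nu>]"

definition f_map :: "nat \<Rightarrow> nat \<Rightarrow> nat list \<Rightarrow> nat list" where
  "f_map a b \<pi> = (THE \<nu>. is_partition \<nu> \<and> set (first_col_hooks \<nu>) = Lset a b \<pi>)"

definition zword :: "nat \<Rightarrow> nat \<Rightarrow> nat list \<Rightarrow> nat \<Rightarrow> bool" where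
  "zword a b \<pi> i = (0 < i \<and> i \<in> Lset a b \<pi>)"

definition f_tilde :: "nat \<Rightarrow> nat \<Rightarrow> nat list \<Rightarrow> nat list" where
  "f_tilde a b \<pi> = ptn_inf (zword a b \<pi>)"

definition step_levels :: "nat \<Rightarrow> nat \<Rightarrow> nat list \<Rightarrow> int set" where
  "step_levels a b \<pi> = {level a b (point (frontier a b \<pi>) k) | k. k < length (frontier a b \<pi>)}"

definition yword :: "nat \<Rightarrow> nat \<Rightarrow> nat list \<Rightarrow> bool list" where
  "yword a b \<pi> = map (zword a b \<pi>)
      (sorted_list_of_set {i. int i + int a \<in> step_levels a b \<pi>})"

definition rho_tilde_f_tilde :: "nat \<Rightarrow> nat \<Rightarrow> nat list \<Rightarrow> nat list" where
  "rho_tilde_f_tilde a b \<pi> = ptn (yword a b \<pi>)"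

(* levels of squares lying directly east of a north step of the frontier path *)
definition east_levels :: "nat \<Rightarrow> nat \<Rightarrow> nat list \<Rightarrow> int set" where
  "east_levels a b \<pi> = {sq_level a b (point (frontier a b \<pi>) k) | k.
       k < length (frontier a b \<pi>) \<and> frontier a b \<pi> ! k}"

definition rho_AHJ :: "nat \<Rightarrow> nat \<Rightarrow> nat list \<Rightarrow> nat list \<Rightarrow> nat list" where
  "rho_AHJ a b \<pi> \<nu> = normalize
     (map (\<lambda>i. card {j. j < \<nu> ! i \<and> hook \<nu> i j \<le> b})
        (filter (\<lambda>i. int (hook \<nu> i 0) \<in> east_levels a b \<pi>) [0..<length \<nu>]))"

end

theory Submission
  imports Defs "HOL-Library.Multiset"
begin

lemma part_mono:
  assumes "is_partition \<nu>" "k \<le> l" "l < length \<nu>"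
  shows "\<nu> ! l \<le> \<nu> ! k"
proof -
  have s: "sorted (rev \<nu>)" using assms(1) unfolding is_partition_def by simp
  have "rev \<nu> ! (length \<nu> - 1 - l) \<le> rev \<nu> ! (length \<nu> - 1 - k)"
    using s assms(2,3) by (intro sorted_nth_mono) auto
  thus ?thesis using assms(2,3) by (simp add: rev_nth)
qed

lemma part_pos: "is_partition \<nu> \<Longrightarrow> k < length \<nu> \<Longrightarrow> 0 < \<nu> ! k"
  unfolding is_partition_def by (metis gr0I nth_mem)

lemma conj_card: "conj \<nu> j = card {k. k < length \<nu> \<and> j < \<nu> ! k}"
  unfolding conj_def by (simp add: length_filter_conv_card)

lemma conj0: "is_partition \<nu> \<Longrightarrow> conj \<nu> 0 = length \<nu>"
  unfolding conj_def is_partition_def by (metis filter_True gr0I)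

lemma hook0: "is_partition \<nu> \<Longrightarrow> i < length \<nu> \<Longrightarrow> hook \<nu> i 0 = \<nu> ! i + length \<nu> - 1 - i"
  unfolding hook_def using conj0 by auto

lemma fch_nth: "is_partition \<nu> \<Longrightarrow> i < length \<nu> \<Longrightarrow> first_col_hooks \<nu> ! i = \<nu> ! i + length \<nu> - 1 - i"
  unfolding first_col_hooks_def using hook0 by auto

lemma fch_len[simp]: "length (first_col_hooks \<nu>) = length \<nu>"
  unfolding first_col_hooks_def by simp

lemma fch_strict: "is_partition \<nu> \<Longrightarrow> i < j \<Longrightarrow> j < length \<nu> \<Longrightarrow> first_col_hooks \<nu> ! j < first_col_hooks \<nu> ! i"
  using fch_nth part_mono[of \<nu> i j] by auto

lemma fch_sorted: assumes "is_partition \<nu>"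
  shows "sorted (rev (first_col_hooks \<nu>)) \<and> distinct (rev (first_col_hooks \<nu>))"
proof -
  have "sorted_wrt (>) (first_col_hooks \<nu>)"
    unfolding sorted_wrt_iff_nth_less using fch_strict[OF assms] by auto
  hence "sorted_wrt (<) (rev (first_col_hooks \<nu>))" by (simp add: sorted_wrt_rev)
  thus ?thesis by (simp add: strict_sorted_iff)
qed

lemma fch_unique:
  assumes "is_partition \<nu>1" "is_partition \<nu>2" "set (first_col_hooks \<nu>1) = set (first_col_hooks \<nu>2)"
  shows "\<nu>1 = \<nu>2"
proof -
  have "rev (first_col_hooks \<nu>1) = rev (first_col_hooks \<nu>2)"
    using fch_sorted[OF assms(1)] fch_sorted[OF assms(2)] assms(3)
    by (intro sorted_distinct_set_unique) auto
  hence e: "first_col_hooks \<nu>1 = first_col_hooks \<nu>2" by simp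
  hence l: "length \<nu>1 = length \<nu>2" by (metis fch_len)
  show ?thesis
  proof (rule nth_equalityI[OF l])
    fix i assume "i < length \<nu>1"
    hence "\<nu>1 ! i + length \<nu>1 - 1 - i = \<nu>2 ! i + length \<nu>2 - 1 - i"
      using fch_nth[OF assms(1)] fch_nth[OF assms(2)] e l by metis
    thus "\<nu>1 ! i = \<nu>2 ! i" using \<open>i < length \<nu>1\<close> l by linarith
  qed
qed

lemma card_le_max:
  assumes "finite L" "0 \<notin> (L::nat set)" "L \<noteq> {}"
  shows "card L \<le> Max L"
proof -
  have "L \<subseteq> {1..Max L}" using assms by (auto simp: Suc_le_eq gr0I)
  hence "card L \<le> card {1..Max L}" by (intro card_mono) auto
  thus ?thesis by simp
qed

lemma exists_part_aux:
  "\<forall>L. finite L \<longrightarrow> 0 \<notin> L \<longrightarrow> card L = n \<longrightarrow> (\<exists>\<nu>. is_partition \<nu> \<and> set (first_col_hooks \<nu>) = L)"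
proof (induction n)
  case 0
  show ?case
  proof (intro allI impI)
    fix L :: "nat set" assume "finite L" "0 \<notin> L" "card L = 0"
    hence "L = {}" by simp
    thus "\<exists>\<nu>. is_partition \<nu> \<and> set (first_col_hooks \<nu>) = L"
      by (intro exI[of _ "[]"]) (simp add: is_partition_def first_col_hooks_def)
  qed
next
  case (Suc n)
  show ?case
  proof (intro allI impI)
    fix L :: "nat set" assume fin: "finite L" and z: "0 \<notin> L" and c: "card L = Suc n"
    have ne: "L \<noteq> {}" using c by auto
    define M where "M = Max L"
    define L' where "L' = L - {M}"
    have hML: "M \<in> L" using fin ne M_def by simp
    have cL': "card L' = n" using c hML fin L'_def by simp
    obtain \<nu>' where p': "is_partition \<nu>'" and s': "set (first_col_hooks \<nu>') = L'"
      using Suc.IH fin z cL' L'_def by (metis finite_Diff DiffD1)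
    have ln: "length \<nu>' = n"
      using s' cL' fch_sorted[OF p'] by (metis distinct_card fch_len length_rev set_rev)
    have Mge: "Suc n \<le> M" using card_le_max[OF fin z ne] c M_def by simp
    have ltM: "x \<in> L' \<Longrightarrow> x < M" for x
      using L'_def M_def fin by (metis DiffE Max_ge insertI1 le_neq_implies_less)
    define \<nu> where "\<nu> = (M - n) # \<nu>'"
    have bound: "\<nu>' ! k \<le> M - n" if "k < n" for k
    proof -
      have "first_col_hooks \<nu>' ! 0 \<in> L'" using s' that ln by (metis fch_len gr_zeroI less_nat_zero_code nth_mem)
      hence "first_col_hooks \<nu>' ! 0 < M" using ltM by simp
      moreover have "first_col_hooks \<nu>' ! 0 = \<nu>' ! 0 + n - 1" using fch_nth[OF p', of 0] that ln by simp
      moreover have "\<nu>' ! k \<le> \<nu>' ! 0" using part_mono[OF p', of 0 k] that ln by simp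
      ultimately show ?thesis using that by linarith
    qed
    have p: "is_partition \<nu>"
      unfolding is_partition_def \<nu>_def
    proof
      show "sorted (rev ((M - n) # \<nu>'))"
        using p' bound ln unfolding is_partition_def by (auto simp: sorted_append in_set_conv_nth)
      show "0 \<notin> set ((M - n) # \<nu>')" using p' Mge unfolding is_partition_def by auto
    qed
    have "first_col_hooks \<nu> = M # first_col_hooks \<nu>'"
    proof (rule nth_equalityI)
      show "length (first_col_hooks \<nu>) = length (M # first_col_hooks \<nu>')" by (simp add: \<nu>_def)
      fix i assume "i < length (first_col_hooks \<nu>)"
      hence i: "i < Suc n" by (simp add: \<nu>_def ln)
      show "first_col_hooks \<nu> ! i = (M # first_col_hooks \<nu>') ! i"
      proof (cases i)
        case 0 thus ?thesis using fch_nth[OF p, of 0] Mge by (simp add: \<nu>_def ln)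
      next
        case (Suc i')
        thus ?thesis using fch_nth[OF p, of i] fch_nth[OF p', of i'] i by (simp add: \<nu>_def ln)
      qed
    qed
    hence "set (first_col_hooks \<nu>) = L" using s' L'_def hML by auto
    thus "\<exists>\<nu>. is_partition \<nu> \<and> set (first_col_hooks \<nu>) = L" using p by blast
  qed
qed

lemma the_part:
  assumes "finite L" "0 \<notin> L"
  shows "is_partition (THE \<nu>. is_partition \<nu> \<and> set (first_col_hooks \<nu>) = L) \<and>
         set (first_col_hooks (THE \<nu>. is_partition \<nu> \<and> set (first_col_hooks \<nu>) = L)) = L"
proof (rule theI')
  show "\<exists>!\<nu>. is_partition \<nu> \<and> set (first_col_hooks \<nu>) = L"
    using exists_part_aux assms fch_unique by metis
qed

lemma conj_le: "conj \<nu> j \<le> length \<nu>"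
  unfolding conj_def by simp

lemma conj_anti: "j1 \<le> j2 \<Longrightarrow> conj \<nu> j2 \<le> conj \<nu> j1"
  unfolding conj_card by (intro card_mono) auto

lemma conj_prefix:
  assumes p: "is_partition \<nu>" and k: "k < length \<nu>"
  shows "j < \<nu> ! k \<longleftrightarrow> k < conj \<nu> j"
proof
  assume h: "j < \<nu> ! k"
  have "{..k} \<subseteq> {k'. k' < length \<nu> \<and> j < \<nu> ! k'}"
    using part_mono[OF p] k h by (auto intro: less_le_trans)
  hence "card {..k} \<le> conj \<nu> j" unfolding conj_card by (intro card_mono) auto
  thus "k < conj \<nu> j" by simp
next
  assume h: "k < conj \<nu> j"
  show "j < \<nu> ! k"
  proof (rule ccontr)
    assume "\<not> j < \<nu> ! k"
    hence "{k'. k' < length \<nu> \<and> j < \<nu> ! k'} \<subseteq> {..<k}"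
      using part_mono[OF p] k by (auto simp: not_less) (meson le_less_trans not_le order_trans)
    hence "conj \<nu> j \<le> card {..<k}" unfolding conj_card by (intro card_mono) auto
    thus False using h by simp
  qed
qed

lemma hook_count:
  assumes p: "is_partition \<nu>" and i: "i < length \<nu>"
  shows "card {j. j < \<nu> ! i \<and> hook \<nu> i j \<le> b} =
         card {m. m < hook \<nu> i 0 \<and> hook \<nu> i 0 \<le> m + b \<and> m \<notin> set (first_col_hooks \<nu>)}"
proof -
  define n where "n = length \<nu>"
  define H where "H = hook \<nu> i 0"
  have H: "H = \<nu> ! i + n - 1 - i" using hook0[OF p i] H_def n_def by simp
  define g where "g j = j + n - conj \<nu> j" for j
  have cle: "conj \<nu> j \<le> n" for j using conj_le n_def by simp
  have a: "i < conj \<nu> j" if "j < \<nu> ! i" for j using conj_prefix[OF p i] that by simp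
  have b: "hook \<nu> i j = H - g j \<and> g j < H" if "j < \<nu> ! i" for j
    using a[OF that] cle[of j] that unfolding H g_def hook_def by auto
  have gmono: "g j1 < g j2" if "j1 < j2" for j1 j2
    using conj_anti[of j1 j2 \<nu>] cle[of j1] cle[of j2] that unfolding g_def by linarith
  have ginj: "inj g" by (metis gmono inj_onI linorder_neqE_nat order_less_irrefl)
  have d: "g j \<notin> set (first_col_hooks \<nu>)" for j
  proof
    assume "g j \<in> set (first_col_hooks \<nu>)"
    then obtain k where k: "k < n" and e: "g j = \<nu> ! k + n - 1 - k"
      using fch_nth[OF p] n_def by (auto simp: in_set_conv_nth)
    show False
    proof (cases "k < conj \<nu> j")
      case True
      hence "j < \<nu> ! k" using conj_prefix[OF p] k n_def by simp
      thus False using e True cle[of j] unfolding g_def by linarith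
    next
      case False
      have kk: "k < length \<nu>" using k n_def by simp
      have "\<nu> ! k \<le> j" using conj_prefix[OF p kk, of j] False by (simp add: not_less)
      thus False using e False k cle[of j] unfolding g_def by linarith
    qed
  qed
  define G where "G = {m. m < H \<and> m \<notin> set (first_col_hooks \<nu>)}"
  have sub: "g ` {..<\<nu> ! i} \<subseteq> G" using b d unfolding G_def by auto
  have fin: "finite G" unfolding G_def by simp
  have hk: "set (first_col_hooks \<nu>) \<inter> {..<H} = (\<lambda>k. first_col_hooks \<nu> ! k) ` {i<..<n}"
  proof
    show "set (first_col_hooks \<nu>) \<inter> {..<H} \<subseteq> (\<lambda>k. first_col_hooks \<nu> ! k) ` {i<..<n}"
    proof
      fix m assume "m \<in> set (first_col_hooks \<nu>) \<inter> {..<H}"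
      then obtain k where k: "k < n" "m = first_col_hooks \<nu> ! k" "m < H"
        using n_def by (auto simp: in_set_conv_nth)
      have "i < k"
      proof (rule ccontr)
        assume "\<not> i < k"
        hence "k = i \<or> k < i" by auto
        thus False using k fch_strict[OF p, of k i] fch_nth[OF p i] H i n_def by auto
      qed
      thus "m \<in> (\<lambda>k. first_col_hooks \<nu> ! k) ` {i<..<n}" using k by auto
    qed
    show "(\<lambda>k. first_col_hooks \<nu> ! k) ` {i<..<n} \<subseteq> set (first_col_hooks \<nu>) \<inter> {..<H}"
      using fch_strict[OF p, of i] fch_nth[OF p i] H n_def by (auto simp: in_set_conv_nth)
  qed
  have inj2: "inj_on (\<lambda>k. first_col_hooks \<nu> ! k) {i<..<n}"
    by (rule inj_onI) (metis greaterThanLessThan_iff fch_strict[OF p] linorder_neqE_nat n_def order_less_irrefl)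
  have "card (set (first_col_hooks \<nu>) \<inter> {..<H}) = n - 1 - i"
    using hk card_image[OF inj2] by simp
  moreover have "G = {..<H} - (set (first_col_hooks \<nu>) \<inter> {..<H})" unfolding G_def by auto
  ultimately have "card G = H - (n - 1 - i)"
    by (simp add: card_Diff_subset)
  hence cG: "card G = \<nu> ! i" using H i n_def by simp
  have gimg: "g ` {..<\<nu> ! i} = G"
    using card_subset_eq[OF fin sub] cG card_image[OF inj_on_subset[OF ginj]] by simp
  have "g ` {j. j < \<nu> ! i \<and> hook \<nu> i j \<le> b} = {m \<in> G. H \<le> m + b}"
  proof
    show "g ` {j. j < \<nu> ! i \<and> hook \<nu> i j \<le> b} \<subseteq> {m \<in> G. H \<le> m + b}"
      using b sub by fastforce
    show "{m \<in> G. H \<le> m + b} \<subseteq> g ` {j. j < \<nu> ! i \<and> hook \<nu> i j \<le> b}"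
    proof
      fix m assume m: "m \<in> {m \<in> G. H \<le> m + b}"
      then obtain j where j: "j < \<nu> ! i" "m = g j" using gimg by blast
      thus "m \<in> g ` {j. j < \<nu> ! i \<and> hook \<nu> i j \<le> b}" using b[OF j(1)] m by auto
    qed
  qed
  hence "card {j. j < \<nu> ! i \<and> hook \<nu> i j \<le> b} = card {m \<in> G. H \<le> m + b}"
    by (metis card_image inj_on_subset ginj subset_UNIV)
  also have "{m \<in> G. H \<le> m + b} = {m. m < hook \<nu> i 0 \<and> hook \<nu> i 0 \<le> m + b \<and> m \<notin> set (first_col_hooks \<nu>)}"
    unfolding G_def H_def by auto
  finally show ?thesis .
qed

lemma normalize_mset: "mset xs = mset ys \<Longrightarrow> normalize xs = normalize ys"
proof -
  assume m: "mset xs = mset ys"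
  have "sort (filter (\<lambda>p. 0 < p) xs) = sort (filter (\<lambda>p. 0 < p) ys)"
    by (rule properties_for_sort) (use m in auto)
  thus ?thesis unfolding normalize_def by simp
qed

lemma mset_map_filter_upt:
  "mset (map f (filter P [0..<n])) = image_mset f (mset_set {k. k < n \<and> P k})"
proof -
  have "{x \<in> {0..<n}. P x} = {k. k < n \<and> P k}" by auto
  thus ?thesis by simp
qed

lemma ptn_mset:
  assumes s: "sorted xs" and d: "distinct xs"
  shows "mset (map (\<lambda>k. length (filter Not (take k (map P xs))))
                 (filter (\<lambda>k. map P xs ! k) [0..<length (map P xs)]))
       = image_mset (\<lambda>h. card {x \<in> set xs. x < h \<and> \<not> P x}) (mset_set {h \<in> set xs. P h})"
proof -
  let ?n = "length xs"
  have A: "mset (map (\<lambda>k. length (filter Not (take k (map P xs))))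
                 (filter (\<lambda>k. map P xs ! k) [0..<length (map P xs)]))
      = image_mset (\<lambda>k. length (filter Not (take k (map P xs)))) (mset_set {k. k < ?n \<and> P (xs ! k)})"
    using mset_map_filter_upt[of "\<lambda>k. length (filter Not (take k (map P xs)))" "\<lambda>k. map P xs ! k" ?n]
    by (smt (verit) Collect_cong length_map nth_map)
  have inj: "inj_on (\<lambda>k. xs ! k) {k. k < ?n \<and> P (xs ! k)}"
    using d by (auto simp: inj_on_def nth_eq_iff_index_eq)
  have img: "(\<lambda>k. xs ! k) ` {k. k < ?n \<and> P (xs ! k)} = {h \<in> set xs. P h}"
    by (auto simp: in_set_conv_nth)
  have val: "length (filter Not (take k (map P xs))) = card {x \<in> set xs. x < xs ! k \<and> \<not> P x}"
    if k: "k < ?n" for k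
  proof -
    have "length (filter Not (take k (map P xs))) = card {i. i < k \<and> \<not> take k (map P xs) ! i}"
      using k by (simp add: length_filter_conv_card min_def)
    also have "card {i. i < k \<and> \<not> take k (map P xs) ! i} = card {j. j < k \<and> \<not> P (xs ! j)}"
      using k by (intro arg_cong[where f=card]) auto
    also have "\<dots> = card ((\<lambda>j. xs ! j) ` {j. j < k \<and> \<not> P (xs ! j)})"
      using d k by (intro card_image[symmetric]) (auto simp: inj_on_def nth_eq_iff_index_eq)
    also have "(\<lambda>j. xs ! j) ` {j. j < k \<and> \<not> P (xs ! j)} = {x \<in> set xs. x < xs ! k \<and> \<not> P x}"
    proof
      have "xs ! j < xs ! k" if "j < k" for j
        using s d k that by (simp add: sorted_iff_nth_mono nth_eq_iff_index_eq order_less_le)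
      thus "(\<lambda>j. xs ! j) ` {j. j < k \<and> \<not> P (xs ! j)} \<subseteq> {x \<in> set xs. x < xs ! k \<and> \<not> P x}"
        using k by auto
      show "{x \<in> set xs. x < xs ! k \<and> \<not> P x} \<subseteq> (\<lambda>j. xs ! j) ` {j. j < k \<and> \<not> P (xs ! j)}"
      proof
        fix x assume x: "x \<in> {x \<in> set xs. x < xs ! k \<and> \<not> P x}"
        then obtain j where j: "j < ?n" "x = xs ! j" by (auto simp: in_set_conv_nth)
        have "j < k"
        proof (rule ccontr)
          assume "\<not> j < k"
          hence "xs ! k \<le> xs ! j" using s j by (simp add: sorted_iff_nth_mono)
          thus False using x j by (auto dest: leD)
        qed
        thus "x \<in> (\<lambda>j. xs ! j) ` {j. j < k \<and> \<not> P (xs ! j)}" using x j by auto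
      qed
    qed
    finally show ?thesis .
  qed
  have "image_mset (\<lambda>k. length (filter Not (take k (map P xs)))) (mset_set {k. k < ?n \<and> P (xs ! k)})
      = image_mset (\<lambda>k. card {x \<in> set xs. x < xs ! k \<and> \<not> P x}) (mset_set {k. k < ?n \<and> P (xs ! k)})"
    by (intro image_mset_cong) (simp add: val)
  also have "\<dots> = image_mset (\<lambda>h. card {x \<in> set xs. x < h \<and> \<not> P x}) (image_mset (\<lambda>k. xs ! k) (mset_set {k. k < ?n \<and> P (xs ! k)}))"
    by (simp add: multiset.map_comp o_def)
  also have "\<dots> = image_mset (\<lambda>h. card {x \<in> set xs. x < h \<and> \<not> P x}) (mset_set {h \<in> set xs. P h})"
    using image_mset_mset_set[OF inj] img by simp
  finally show ?thesis using A by simp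
qed

lemma msl: "mset (sorted_list_of_set A) = mset_set A"
  by (metis mset_sorted_list_of_multiset sorted_list_of_mset_set)

lemma ptn_map_sorted:
  assumes "sorted xs" "distinct xs"
  shows "ptn (map P xs) = normalize (map (\<lambda>h. card {x \<in> set xs. x < h \<and> \<not> P x}) (sorted_list_of_set {h \<in> set xs. P h}))"
  unfolding ptn_def
  by (rule normalize_mset, rule trans[OF ptn_mset[OF assms]]) (simp add: mset_map msl)

lemma fr_props:
  "sorted (p # xs) \<Longrightarrow> (\<forall>x\<in>set (p # xs). x \<le> b) \<Longrightarrow>
   length (fr b p xs) = length xs + (b - p) \<and>
   (\<forall>k < length xs + (b - p). fr b p xs ! k = (\<exists>y<length xs. k = xs ! y - p + y))"
proof (induction xs arbitrary: p)
  case Nil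
  then show ?case by simp
next
  case (Cons x xs)
  have px: "p \<le> x" and xb: "x \<le> b" using Cons.prems by auto
  have s: "sorted (x # xs)" using Cons.prems(1) by simp
  have ge: "\<forall>z\<in>set xs. x \<le> z" using s by simp
  have IH: "length (fr b x xs) = length xs + (b - x)"
    "\<And>k. k < length xs + (b - x) \<Longrightarrow> fr b x xs ! k = (\<exists>y<length xs. k = xs ! y - x + y)"
    using Cons.IH[of x] s Cons.prems(2) by auto
  have len: "length (fr b p (x # xs)) = length (x # xs) + (b - p)"
    using IH(1) px xb by simp
  moreover have "fr b p (x # xs) ! k = (\<exists>y<length (x # xs). k = (x # xs) ! y - p + y)"
    if k: "k < length (x # xs) + (b - p)" for k
  proof (cases "k < x - p")
    case True
    have "\<not> (\<exists>y<length (x # xs). k = (x # xs) ! y - p + y)"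
    proof
      assume "\<exists>y<length (x # xs). k = (x # xs) ! y - p + y"
      then obtain y where y: "y < length (x # xs)" "k = (x # xs) ! y - p + y" by blast
      show False
      proof (cases y)
        case 0 thus False using y True by simp
      next
        case (Suc y')
        hence "x \<le> xs ! y'" using ge y by simp
        thus False using y Suc True by simp
      qed
    qed
    thus ?thesis using True by (simp add: nth_append)
  next
    case False
    show ?thesis
    proof (cases "k = x - p")
      case True
      have "fr b p (x # xs) ! k = True" using True by (simp add: nth_append)
      moreover have "\<exists>y<length (x # xs). k = (x # xs) ! y - p + y"
        using True by (intro exI[of _ 0]) simp
      ultimately show ?thesis by simp
    next
      case False2: False
      define k' where "k' = k - (x - p) - 1"
      have kk: "k = (x - p) + Suc k'" using False False2 k'_def by simp
      have k'l: "k' < length xs + (b - x)" using k kk px xb by simp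
      have "fr b p (x # xs) ! k = fr b x xs ! k'" using kk by (simp add: nth_append)
      also have "\<dots> = (\<exists>y<length xs. k' = xs ! y - x + y)" using IH(2)[OF k'l] .
      also have "\<dots> = (\<exists>y<length (x # xs). k = (x # xs) ! y - p + y)"
      proof
        assume "\<exists>y<length xs. k' = xs ! y - x + y"
        then obtain y where y: "y < length xs" "k' = xs ! y - x + y" by blast
        have "x \<le> xs ! y" using ge y(1) by simp
        hence "k = (x # xs) ! Suc y - p + Suc y" using y kk px by simp
        thus "\<exists>y<length (x # xs). k = (x # xs) ! y - p + y" using y(1) by (intro exI[of _ "Suc y"]) simp
      next
        assume "\<exists>y<length (x # xs). k = (x # xs) ! y - p + y"
        then obtain y where y: "y < length (x # xs)" "k = (x # xs) ! y - p + y" by blast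
        show "\<exists>y<length xs. k' = xs ! y - x + y"
        proof (cases y)
          case 0 thus ?thesis using y False2 by simp
        next
          case (Suc y')
          have "x \<le> xs ! y'" using ge y Suc by simp
          thus ?thesis using y Suc kk px by (intro exI[of _ y']) auto
        qed
      qed
      finally show ?thesis .
    qed
  qed
  ultimately show ?case by simp
qed

lemma lev_inj:
  fixes x x' y y' :: int and a b :: nat
  assumes cop: "coprime a b" and d: "\<bar>x - x'\<bar> < int b"
    and e: "int b * y - int a * x = int b * y' - int a * x'"
  shows "x = x' \<and> y = y'"
proof -
  have "int b * (y - y') = int a * (x - x')" using e by (simp add: algebra_simps)
  hence "int b dvd int a * (x - x')" by (metis dvd_triv_left)
  moreover have "coprime (int b) (int a)" using cop by (simp add: coprime_commute)
  ultimately have "int b dvd (x - x')" using coprime_dvd_mult_right_iff by blast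
  hence "x - x' = 0"
  proof -
    assume dv: "int b dvd (x - x')"
    show ?thesis
    proof (rule ccontr)
      assume "x - x' \<noteq> 0"
      hence "\<bar>int b\<bar> \<le> \<bar>x - x'\<bar>" using dvd_imp_le_int dv by blast
      thus False using d by simp
    qed
  qed
  hence "x = x'" by simp
  moreover have "b > 0" using d by simp
  ultimately show ?thesis using e by simp
qed

lemma lev_rep:
  fixes a b m :: nat
  assumes cop: "coprime a b" and b: "0 < b"
  shows "\<exists>X<b. \<exists>Y::int. int m = int b * Y - int a * (int X + 1)"
proof -
  obtain u v where uv: "u * int a + v * int b = gcd (int a) (int b)" using bezout_int by blast
  have g: "gcd (int a) (int b) = 1" using cop by simp
  define r where "r = (- int m * u - 1) mod int b"
  define t where "t = (- int m * u - 1) div int b"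
  have rt: "- int m * u - 1 = int b * t + r" unfolding r_def t_def by simp
  have r0: "0 \<le> r" "r < int b" unfolding r_def using b by simp_all
  have "int m = int b * (int m * v - int a * t) - int a * (r + 1)"
  proof -
    have "int a * (r + 1) = int a * (- int m * u - int b * t)" using rt by (simp add: algebra_simps)
    also have "\<dots> = - int m * (u * int a) - int a * int b * t" by (simp add: algebra_simps)
    also have "u * int a = 1 - v * int b" using uv g by simp
    finally show ?thesis by (simp add: algebra_simps)
  qed
  thus ?thesis using r0 by (intro exI[of _ "nat r"]) auto
qed

lemma aux1: "\<not> (A::nat) + c < k \<Longrightarrow> A + c \<noteq> k \<Longrightarrow> c \<le> k \<Longrightarrow> k - c < A" by arith
lemma aux2: "(c::nat) = a \<Longrightarrow> k < a + b \<Longrightarrow> c \<le> k \<Longrightarrow> k - c < b" by arith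

locale geo =
  fixes a b :: nat and \<pi> :: "nat list"
  assumes apos: "0 < a" and bpos: "0 < b" and cop: "coprime a b" and D: "\<pi> \<in> Dset a b"
begin

definition q where "q = rev (padded a \<pi>)"
definition w where "w = frontier a b \<pi>"
definition cN where "cN k = card {y. y < a \<and> q ! y + y < k}"

lemma pi_part: "is_partition \<pi>" and pi_len: "length \<pi> \<le> a" and pi_le: "\<forall>p\<in>set \<pi>. p \<le> b"
  using D unfolding Dset_def by auto

lemma padded_len: "length (padded a \<pi>) = a"
  using pi_len unfolding padded_def by simp

lemma q_len: "length q = a" unfolding q_def using padded_len by simp

lemma q_sorted: "sorted q"
proof -
  have "q = replicate (a - length \<pi>) 0 @ rev \<pi>" unfolding q_def padded_def by simp
  moreover have "sorted (rev \<pi>)" using pi_part unfolding is_partition_def by simp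
  ultimately show ?thesis by (simp add: sorted_append)
qed

lemma q_le: "y < a \<Longrightarrow> q ! y \<le> b"
proof -
  assume "y < a"
  hence "q ! y \<in> set q" using q_len by simp
  hence "q ! y \<in> set \<pi> \<or> q ! y = 0" unfolding q_def padded_def by auto
  thus ?thesis using pi_le by auto
qed

lemma q_mono: "y \<le> y' \<Longrightarrow> y' < a \<Longrightarrow> q ! y \<le> q ! y'"
  using q_sorted q_len by (simp add: sorted_iff_nth_mono)

lemma indiag: "y < a \<Longrightarrow> in_diagram a \<pi> (x, y) \<longleftrightarrow> x < q ! y"
  unfolding in_diagram_def q_def using padded_len by (simp add: rev_nth)

lemma w_fr: "w = fr b 0 q"
  unfolding w_def frontier_def q_def by simp

lemma w_props: "length w = a + b \<and> (\<forall>k < a + b. w ! k = (\<exists>y<a. k = q ! y + y))"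
proof -
  have "sorted (0 # q)" using q_sorted by simp
  moreover have "\<forall>x\<in>set (0 # q). x \<le> b" using q_le q_len by (auto simp: in_set_conv_nth)
  ultimately show ?thesis using fr_props[of 0 q b] w_fr q_len by simp
qed

lemma w_len: "length w = a + b" using w_props by simp
lemma w_nth: "k < a + b \<Longrightarrow> w ! k = (\<exists>y<a. k = q ! y + y)" using w_props by simp

lemma Npos_mono: "y < y' \<Longrightarrow> y' < a \<Longrightarrow> q ! y + y < q ! y' + y'"
  using q_mono[of y y'] by simp

lemma Npos_inj: "y < a \<Longrightarrow> y' < a \<Longrightarrow> q ! y + y = q ! y' + y' \<Longrightarrow> y = y'"
  by (metis Npos_mono linorder_neqE_nat order_less_irrefl)

lemma Npos_bound: "y < a \<Longrightarrow> q ! y + y < a + b"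
  using q_le[of y] by simp

lemma cN_le_a: "cN k \<le> a"
proof -
  have "cN k \<le> card {..<a}" unfolding cN_def by (intro card_mono) auto
  thus ?thesis by simp
qed

lemma cN_prefix: "y < a \<Longrightarrow> (q ! y + y < k \<longleftrightarrow> y < cN k)"
proof
  assume y: "y < a" and h: "q ! y + y < k"
  have "{..y} \<subseteq> {y. y < a \<and> q ! y + y < k}"
  proof
    fix z assume "z \<in> {..y}"
    hence z: "z \<le> y" by simp
    hence "q ! z \<le> q ! y" using q_mono y by simp
    thus "z \<in> {y. y < a \<and> q ! y + y < k}" using z y h by simp
  qed
  hence "card {..y} \<le> cN k" unfolding cN_def by (intro card_mono) auto
  thus "y < cN k" by simp
next
  assume y: "y < a" and h: "y < cN k"
  show "q ! y + y < k"
  proof (rule ccontr)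
    assume "\<not> q ! y + y < k"
    hence "{y. y < a \<and> q ! y + y < k} \<subseteq> {..<y}"
    proof (intro subsetI)
      fix z assume nk: "\<not> q ! y + y < k" and "z \<in> {y. y < a \<and> q ! y + y < k}"
      hence z: "z < a" "q ! z + z < k" by auto
      show "z \<in> {..<y}"
      proof (rule ccontr)
        assume "z \<notin> {..<y}"
        hence "y \<le> z" by simp
        hence "q ! y \<le> q ! z" using q_mono z by simp
        thus False using \<open>y \<le> z\<close> z nk by simp
      qed
    qed
    hence "cN k \<le> card {..<y}" unfolding cN_def by (intro card_mono) auto
    thus False using h by simp
  qed
qed

lemma cN_le_k: "cN k \<le> k"
proof (cases "cN k = 0")
  case False
  hence "cN k - 1 < a" using cN_le_a[of k] by simp
  moreover have "cN k - 1 < cN k" using False by simp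
  ultimately have "q ! (cN k - 1) + (cN k - 1) < k" using cN_prefix[of "cN k - 1" k] by blast
  thus ?thesis by simp
qed simp

lemma cN_Suc: "cN (Suc j) = cN j + (if (\<exists>y<a. j = q ! y + y) then 1 else 0)"
proof -
  have un: "{y. y < a \<and> q ! y + y < Suc j} = {y. y < a \<and> q ! y + y < j} \<union> {y. y < a \<and> j = q ! y + y}"
    by auto
  have fin: "finite {y. y < a \<and> q ! y + y < j}" "finite {y. y < a \<and> j = q ! y + y}" by auto
  have dis: "{y. y < a \<and> q ! y + y < j} \<inter> {y. y < a \<and> j = q ! y + y} = {}" by auto
  have c: "card {y. y < a \<and> j = q ! y + y} = (if (\<exists>y<a. j = q ! y + y) then 1 else 0)"
  proof (cases "\<exists>y<a. j = q ! y + y")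
    case True
    then obtain y where y: "y < a" "j = q ! y + y" by blast
    hence "{y. y < a \<and> j = q ! y + y} = {y}" using Npos_inj by auto
    thus ?thesis using True by simp
  next
    case False
    hence "{y. y < a \<and> j = q ! y + y} = {}" by auto
    thus ?thesis by (simp only: card.empty if_not_P[OF False])
  qed
  show ?thesis unfolding cN_def un card_Un_disjoint[OF fin dis] c by simp
qed

lemma cN_total: "cN (a + b) = a"
proof -
  have "{y. y < a \<and> q ! y + y < a + b} = {..<a}" using Npos_bound by auto
  thus ?thesis unfolding cN_def by simp
qed

lemma cN_0: "cN 0 = 0" unfolding cN_def by simp

lemma point_eq: "k \<le> a + b \<Longrightarrow> point w k = (k - cN k, cN k)"
proof -
  assume k: "k \<le> a + b"
  have T: "length (filter id (take k w)) = cN k"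
  proof -
    have "length (filter id (take k w)) = card {i. i < length (take k w) \<and> id (take k w ! i)}"
      by (rule length_filter_conv_card)
    also have "\<dots> = card {i. i < k \<and> w ! i}"
      using k w_len by (intro arg_cong[where f=card]) auto
    also have "{i. i < k \<and> w ! i} = (\<lambda>y. q ! y + y) ` {y. y < a \<and> q ! y + y < k}"
      using w_nth k by auto
    also have "card \<dots> = cN k" unfolding cN_def
      by (intro card_image) (auto simp: inj_on_def intro: Npos_inj)
    finally show ?thesis .
  qed
  have "length (filter id (take k w)) + length (filter (\<lambda>x. \<not> id x) (take k w)) = k"
    using sum_length_filter_compl[of id "take k w"] k w_len by simp
  hence "length (filter Not (take k w)) = k - cN k" using T by simp
  thus ?thesis unfolding point_def using T by simp
qed

lemma lev_nonneg: "k \<le> a + b \<Longrightarrow> 0 \<le> int b * int (cN k) - int a * int (k - cN k)"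
proof -
  assume k: "k \<le> a + b"
  have "0 \<le> level a b (point (frontier a b \<pi>) k)" using D k w_len unfolding Dset_def w_def by auto
  thus ?thesis using point_eq[OF k] unfolding level_def w_def by simp
qed

lemma cN_Npos: "y < a \<Longrightarrow> cN (q ! y + y) = y"
proof -
  assume y: "y < a"
  have "{y'. y' < a \<and> q ! y' + y' < q ! y + y} = {..<y}"
    using y Npos_mono by (auto) (metis linorder_neqE_nat order_less_asym)
  thus ?thesis unfolding cN_def by simp
qed

lemma E1: "k < a + b \<Longrightarrow> \<not> w ! k \<Longrightarrow> cN k < a \<Longrightarrow> k - cN k < q ! (cN k)"
proof -
  assume k: "k < a + b" and e: "\<not> w ! k" and c: "cN k < a"
  have "\<not> q ! (cN k) + cN k < k" using cN_prefix[OF c] by simp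
  moreover have "q ! (cN k) + cN k \<noteq> k" using e w_nth k c by auto
  ultimately show ?thesis using cN_le_k by (rule aux1)
qed

lemma E2: "Y < cN k \<Longrightarrow> q ! Y + cN k \<le> k"
proof -
  assume Y: "Y < cN k"
  have c1: "cN k - 1 < a" using cN_le_a[of k] Y by simp
  have "q ! (cN k - 1) + (cN k - 1) < k" using cN_prefix[OF c1] Y by simp
  moreover have "q ! Y \<le> q ! (cN k - 1)" using q_mono c1 Y by simp
  ultimately show ?thesis using Y by simp
qed

lemma E3: "k < a + b \<Longrightarrow> \<not> w ! k \<Longrightarrow> cN (Suc k) = cN k"
  using cN_Suc w_nth by simp

lemma E5: "k < a + b \<Longrightarrow> \<not> w ! k \<Longrightarrow> k - cN k < b"
proof -
  assume k: "k < a + b" and e: "\<not> w ! k"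
  show ?thesis
  proof (cases "cN k < a")
    case True thus ?thesis using E1[OF k e True] q_le[OF True] by simp
  next
    case False hence "cN k = a" using cN_le_a[of k] by simp
    thus ?thesis using k cN_le_k by (rule aux2)
  qed
qed

lemma N_point: "k < a + b \<Longrightarrow> w ! k \<Longrightarrow> \<exists>y<a. k = q ! y + y \<and> cN k = y"
  using w_nth cN_Npos by blast

lemma x_mono: "k \<le> k' \<Longrightarrow> k - cN k \<le> k' - cN k' \<and> cN k \<le> cN k'"
proof (induction k' rule: dec_induct)
  case base thus ?case by simp
next
  case (step j)
  have "cN (Suc j) \<le> cN j + 1" using cN_Suc by simp
  moreover have "cN j \<le> cN (Suc j)" using cN_Suc by simp
  moreover have "cN j \<le> j" by (rule cN_le_k)
  ultimately show ?case using step.IH by linarith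
qed

lemma col_unique:
  assumes "k1 < a + b" "k2 < a + b" "\<not> w ! k1" "\<not> w ! k2" "k1 - cN k1 = k2 - cN k2"
  shows "k1 = k2"
proof (rule ccontr)
  assume ne: "k1 \<noteq> k2"
  have gen: "\<And>i j. i < j \<Longrightarrow> i < a + b \<Longrightarrow> \<not> w ! i \<Longrightarrow> i - cN i < j - cN j"
  proof -
    fix i j assume ij: "i < j" and i: "i < a + b" and e: "\<not> w ! i"
    have "Suc i - cN (Suc i) \<le> j - cN j" using x_mono[of "Suc i" j] ij by simp
    moreover have "cN (Suc i) = cN i" using E3 i e by simp
    moreover have "cN i \<le> i" by (rule cN_le_k)
    ultimately show "i - cN i < j - cN j" by linarith
  qed
  show False using ne assms gen[of k1 k2] gen[of k2 k1] by (metis linorder_neqE_nat order_less_irrefl)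
qed

lemma col_exists:
  assumes X: "X < b"
  shows "\<exists>k < a + b. \<not> w ! k \<and> k - cN k = X"
proof -
  define k0 where "k0 = (LEAST k. X < k - cN k)"
  have ex: "X < (a + b) - cN (a + b)" using cN_total X by simp
  have k0: "X < k0 - cN k0" using LeastI[of "\<lambda>k. X < k - cN k", OF ex] k0_def by simp
  have k0le: "k0 \<le> a + b" using Least_le[of "\<lambda>k. X < k - cN k", OF ex] k0_def by simp
  have k0pos: "k0 \<noteq> 0" using k0 by (auto simp: cN_0)
  then obtain j where j: "k0 = Suc j" by (cases k0) auto
  have "\<not> X < j - cN j" using not_less_Least[of j "\<lambda>k. X < k - cN k"] j k0_def by simp
  moreover have "cN j \<le> j" by (rule cN_le_k)
  moreover have "j < a + b" using k0le j by simp
  ultimately have "\<not> w ! j \<and> j - cN j = X"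
    using k0 cN_Suc[of j] w_nth[of j] j by (auto split: if_splits)
  thus ?thesis using \<open>j < a + b\<close> by blast
qed

end

context geo begin

definition lv where "lv k = int b * int (cN k) - int a * int (k - cN k)"
definition sqv where "sqv x y = int b * int y - int a * (int x + 1)"

lemma level_point: "k \<le> a + b \<Longrightarrow> level a b (point w k) = lv k"
  using point_eq unfolding level_def lv_def by simp

lemma sq_level_point: "k \<le> a + b \<Longrightarrow> sq_level a b (point w k) = lv k - int a"
  using point_eq unfolding sq_level_def level_def lv_def by (simp add: algebra_simps)

lemma sq_level_sqv: "sq_level a b (x, y) = sqv x y"
  unfolding sq_level_def level_def sqv_def by simp

lemma Lmem: "h \<in> Lset a b \<pi> \<longleftrightarrow> (\<exists>x y. x < b \<and> y < a \<and> q ! y \<le> x \<and> 0 < sqv x y \<and> int h = sqv x y)"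
proof
  assume "h \<in> Lset a b \<pi>"
  then obtain x y where xy: "h = nat (sqv x y)" "x < b" "y < a" "\<not> in_diagram a \<pi> (x, y)" "0 < sqv x y"
    unfolding Lset_def sq_level_sqv by blast
  thus "\<exists>x y. x < b \<and> y < a \<and> q ! y \<le> x \<and> 0 < sqv x y \<and> int h = sqv x y"
    using indiag[of y x] by (intro exI[of _ x] exI[of _ y]) auto
next
  assume "\<exists>x y. x < b \<and> y < a \<and> q ! y \<le> x \<and> 0 < sqv x y \<and> int h = sqv x y"
  then obtain x y where xy: "x < b" "y < a" "q ! y \<le> x" "0 < sqv x y" "int h = sqv x y" by blast
  thus "h \<in> Lset a b \<pi>"
    unfolding Lset_def sq_level_sqv mem_Collect_eq using indiag[of y x]
    by (intro exI[of _ x] exI[of _ y]) auto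
qed

lemma L_pos: "h \<in> Lset a b \<pi> \<Longrightarrow> 0 < h"
  using Lmem by fastforce

lemma L_fin: "finite (Lset a b \<pi>)"
proof -
  have "Lset a b \<pi> \<subseteq> (\<lambda>(x, y). nat (sqv x y)) ` ({..<b} \<times> {..<a})"
    unfolding Lset_def sq_level_sqv by auto
  thus ?thesis by (rule finite_subset) auto
qed

lemma E_lv: "k < a + b \<Longrightarrow> \<not> w ! k \<Longrightarrow> lv k - int a = sqv (k - cN k) (cN k) \<and> 0 \<le> lv k - int a"
proof -
  assume k: "k < a + b" and e: "\<not> w ! k"
  have c: "cN (Suc k) = cN k" using E3 k e by simp
  have ck: "cN k \<le> k" by (rule cN_le_k)
  have "0 \<le> lv (Suc k)" using lev_nonneg[of "Suc k"] k unfolding lv_def by simp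
  moreover have "lv (Suc k) = lv k - int a" unfolding lv_def using c ck by (simp add: Suc_diff_le algebra_simps)
  moreover have "lv k - int a = sqv (k - cN k) (cN k)" unfolding lv_def sqv_def by (simp add: algebra_simps)
  ultimately show ?thesis by simp
qed

lemma sqv_zero: "x < b \<Longrightarrow> sqv x y = 0 \<Longrightarrow> y = a"
proof -
  assume x: "x < b" and z: "sqv x y = 0"
  have "int b * int y - int a * (int x + 1) = int b * int a - int a * int b"
    using z unfolding sqv_def by simp
  moreover have "\<bar>(int x + 1) - int b\<bar> < int b" using x by simp
  ultimately show ?thesis using lev_inj[OF cop, of "int x + 1" "int b" "int y" "int a"] by simp
qed

lemma T1:
  assumes k: "k < a + b" and n: "w ! k" and i: "int i + int a = lv k"
  shows "i \<in> Lset a b \<pi>"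
proof -
  obtain y where y: "y < a" "k = q ! y + y" "cN k = y" using N_point[OF k n] by blast
  have lvk: "lv k = int b * int y - int a * int (q ! y)" unfolding lv_def using y by simp
  have qb: "q ! y < b"
  proof (rule ccontr)
    assume "\<not> q ! y < b"
    hence "q ! y = b" using q_le[OF y(1)] by simp
    hence "lv k = int b * int y - int a * int b" using lvk by simp
    moreover have "int b * int y < int b * int a" using y(1) bpos by simp
    ultimately have "lv k < 0" by (simp add: algebra_simps)
    thus False using i by simp
  qed
  have sv: "sqv (q ! y) y = int i" unfolding sqv_def using i lvk by (simp add: algebra_simps)
  have "sqv (q ! y) y \<noteq> 0" using sqv_zero[OF qb] y(1) by auto
  hence "0 < sqv (q ! y) y" using sv by simp
  thus ?thesis unfolding Lmem using qb y(1) sv by (intro exI[of _ "q ! y"] exI[of _ y]) simp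
qed

lemma T2:
  assumes k: "k < a + b" and e: "\<not> w ! k" and i: "int i = lv k - int a"
  shows "i \<notin> Lset a b \<pi>"
proof
  assume "i \<in> Lset a b \<pi>"
  then obtain x' y' where xy: "x' < b" "y' < a" "q ! y' \<le> x'" "int i = sqv x' y'" using Lmem by blast
  define x where "x = k - cN k"
  have xb: "x < b" using E5[OF k e] x_def by simp
  have "sqv x (cN k) = sqv x' y'" using E_lv[OF k e] i xy(4) x_def by simp
  hence "int b * int (cN k) - int a * (int x + 1) = int b * int y' - int a * (int x' + 1)" unfolding sqv_def .
  moreover have "\<bar>(int x + 1) - (int x' + 1)\<bar> < int b" using xb xy(1) by simp
  ultimately have "x = x' \<and> cN k = y'" using lev_inj[OF cop, of "int x + 1" "int x' + 1" "int (cN k)" "int y'"] by simp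
  hence "x < q ! (cN k)" and "q ! (cN k) \<le> x" using E1[OF k e] xy x_def by auto
  thus False by simp
qed

lemma S_eq: "step_levels a b \<pi> = lv ` {..<a + b}"
proof (intro equalityI subsetI)
  fix s assume "s \<in> step_levels a b \<pi>"
  then obtain k where "k < a + b" "s = level a b (point w k)"
    unfolding step_levels_def w_def[symmetric] w_len by blast
  thus "s \<in> lv ` {..<a + b}" using level_point by auto
next
  fix s assume "s \<in> lv ` {..<a + b}"
  then obtain k where "k < a + b" "s = lv k" by auto
  thus "s \<in> step_levels a b \<pi>"
    unfolding step_levels_def w_def[symmetric] w_len using level_point[of k] by (auto intro!: exI[of _ k])
qed

lemma east_eq: "east_levels a b \<pi> = {lv k - int a | k. k < a + b \<and> w ! k}"
proof (intro equalityI subsetI)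
  fix s assume "s \<in> east_levels a b \<pi>"
  then obtain k where "k < a + b" "w ! k" "s = sq_level a b (point w k)"
    unfolding east_levels_def w_def[symmetric] w_len by blast
  thus "s \<in> {lv k - int a | k. k < a + b \<and> w ! k}" using sq_level_point by auto
next
  fix s assume "s \<in> {lv k - int a | k. k < a + b \<and> w ! k}"
  then obtain k where "k < a + b" "w ! k" "s = lv k - int a" by auto
  thus "s \<in> east_levels a b \<pi>"
    unfolding east_levels_def w_def[symmetric] w_len using sq_level_point[of k] by (auto intro!: exI[of _ k])
qed

definition I' where "I' = {i::nat. int i + int a \<in> step_levels a b \<pi>}"

lemma I'_fin: "finite I'"
proof -
  have "I' \<subseteq> (\<lambda>s. nat (s - int a)) ` step_levels a b \<pi>"
    unfolding I'_def by (auto simp: image_iff) (metis add_diff_cancel_right' nat_int)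
  thus ?thesis using S_eq by (simp add: finite_subset)
qed

lemma A_char: "i \<in> I' \<and> i \<notin> Lset a b \<pi> \<longleftrightarrow> (\<exists>k<a + b. \<not> w ! k \<and> int i = lv k - int a)"
proof
  assume h: "i \<in> I' \<and> i \<notin> Lset a b \<pi>"
  then obtain k where k: "k < a + b" "int i + int a = lv k" unfolding I'_def S_eq by auto
  have "\<not> w ! k" using T1[OF k(1) _ k(2)] h by auto
  thus "\<exists>k<a + b. \<not> w ! k \<and> int i = lv k - int a" using k by auto
next
  assume "\<exists>k<a + b. \<not> w ! k \<and> int i = lv k - int a"
  then obtain k where k: "k < a + b" "\<not> w ! k" "int i = lv k - int a" by blast
  have "i \<in> I'" unfolding I'_def S_eq using k by auto
  thus "i \<in> I' \<and> i \<notin> Lset a b \<pi>" using T2[OF k] by simp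
qed

lemma H_eq: "{h \<in> I'. zword a b \<pi> h} = {h \<in> Lset a b \<pi>. int h \<in> east_levels a b \<pi>}"
proof
  show "{h \<in> I'. zword a b \<pi> h} \<subseteq> {h \<in> Lset a b \<pi>. int h \<in> east_levels a b \<pi>}"
  proof
    fix h assume "h \<in> {h \<in> I'. zword a b \<pi> h}"
    hence hL: "h \<in> Lset a b \<pi>" and hI: "h \<in> I'" unfolding zword_def by auto
    then obtain k where k: "k < a + b" "int h + int a = lv k" unfolding I'_def S_eq by auto
    have "w ! k" using T2[OF k(1), of h] k(2) hL by auto
    thus "h \<in> {h \<in> Lset a b \<pi>. int h \<in> east_levels a b \<pi>}"
      unfolding east_eq using hL k by force
  qed
  show "{h \<in> Lset a b \<pi>. int h \<in> east_levels a b \<pi>} \<subseteq> {h \<in> I'. zword a b \<pi> h}"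
  proof
    fix h assume "h \<in> {h \<in> Lset a b \<pi>. int h \<in> east_levels a b \<pi>}"
    hence hL: "h \<in> Lset a b \<pi>" and "int h \<in> east_levels a b \<pi>" by auto
    then obtain k where k: "k < a + b" "int h = lv k - int a" unfolding east_eq by auto
    have "h \<in> I'" unfolding I'_def S_eq using k by auto
    thus "h \<in> {h \<in> I'. zword a b \<pi> h}" using hL L_pos[OF hL] unfolding zword_def by simp
  qed
qed

end

context geo begin

lemma sqv_inj:
  assumes "x < b" "x' < b" "sqv x y = sqv x' y'"
  shows "x = x' \<and> y = y'"
proof -
  have "int b * int y - int a * (int x + 1) = int b * int y' - int a * (int x' + 1)"
    using assms(3) unfolding sqv_def .
  moreover have "\<bar>(int x + 1) - (int x' + 1)\<bar> < int b" using assms(1,2) by simp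
  ultimately show ?thesis using lev_inj[OF cop, of "int x + 1" "int x' + 1" "int y" "int y'"] by simp
qed

lemma sqv_shift: "sqv x (y + t) = sqv x y + int b * int t"
  unfolding sqv_def by (simp add: algebra_simps)

lemma bij_count:
  assumes h: "0 < h"
  shows "card {x \<in> I'. x < h \<and> \<not> zword a b \<pi> x} = card {m. m < h \<and> h \<le> m + b \<and> m \<notin> Lset a b \<pi>}"
proof -
  let ?L = "Lset a b \<pi>"
  define A where "A = {i. i < h \<and> (\<exists>k<a + b. \<not> w ! k \<and> int i = lv k - int a)}"
  define B where "B = {m. m < h \<and> h \<le> m + b \<and> m \<notin> ?L}"
  have LA: "{x \<in> I'. x < h \<and> \<not> zword a b \<pi> x} = A"
    unfolding A_def using A_char L_pos unfolding zword_def by blast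
  define \<phi> where "\<phi> i = i + b * ((h - 1 - i) div b)" for i
  have range: "\<phi> i < h \<and> h \<le> \<phi> i + b" if "i < h" for i
  proof -
    have dm: "b * ((h - 1 - i) div b) + (h - 1 - i) mod b = h - 1 - i" by simp
    have "(h - 1 - i) mod b < b" using bpos by simp
    thus ?thesis using dm that unfolding \<phi>_def by linarith
  qed
  have into: "\<phi> i \<in> B" if "i \<in> A" for i
  proof -
    from that obtain k where i: "i < h" and k: "k < a + b" "\<not> w ! k" "int i = lv k - int a"
      unfolding A_def by blast
    define x where "x = k - cN k"
    define t where "t = (h - 1 - i) div b"
    have xb: "x < b" using E5[OF k(1,2)] x_def by simp
    have iv: "int i = sqv x (cN k)" using E_lv[OF k(1,2)] k(3) x_def by simp
    have pv: "int (\<phi> i) = sqv x (cN k + t)" unfolding \<phi>_def t_def sqv_shift using iv by simp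
    have "\<phi> i \<notin> ?L"
    proof
      assume "\<phi> i \<in> ?L"
      then obtain x' y' where xy: "x' < b" "y' < a" "q ! y' \<le> x'" "int (\<phi> i) = sqv x' y'"
        using Lmem by blast
      have "x = x' \<and> cN k + t = y'" using sqv_inj[OF xb xy(1), of "cN k + t" y'] pv xy(4) by simp
      moreover have "cN k < a" using calculation xy(2) by simp
      moreover have "x < q ! (cN k)" using E1[OF k(1,2)] calculation x_def by simp
      moreover have "q ! (cN k) \<le> q ! y'" using q_mono calculation xy(2) by simp
      ultimately show False using xy(3) by simp
    qed
    thus ?thesis using range[OF i] unfolding B_def by simp
  qed
  have inj: "inj_on \<phi> A"
  proof (rule inj_onI)
    fix i1 i2 assume i1: "i1 \<in> A" and i2: "i2 \<in> A" and e: "\<phi> i1 = \<phi> i2"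
    from i1 obtain k1 where k1: "k1 < a + b" "\<not> w ! k1" "int i1 = lv k1 - int a" unfolding A_def by blast
    from i2 obtain k2 where k2: "k2 < a + b" "\<not> w ! k2" "int i2 = lv k2 - int a" unfolding A_def by blast
    define t1 where "t1 = (h - 1 - i1) div b"
    define t2 where "t2 = (h - 1 - i2) div b"
    have v1: "int (\<phi> i1) = sqv (k1 - cN k1) (cN k1 + t1)"
      unfolding \<phi>_def t1_def sqv_shift using E_lv[OF k1(1,2)] k1(3) by simp
    have v2: "int (\<phi> i2) = sqv (k2 - cN k2) (cN k2 + t2)"
      unfolding \<phi>_def t2_def sqv_shift using E_lv[OF k2(1,2)] k2(3) by simp
    have "k1 - cN k1 = k2 - cN k2" using sqv_inj[OF E5[OF k1(1,2)] E5[OF k2(1,2)], of "cN k1 + t1" "cN k2 + t2"] v1 v2 e by simp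
    hence "k1 = k2" using col_unique k1 k2 by blast
    thus "i1 = i2" using k1(3) k2(3) by simp
  qed
  have onto: "B \<subseteq> \<phi> ` A"
  proof
    fix m assume mB: "m \<in> B"
    hence m: "m < h" "h \<le> m + b" "m \<notin> ?L" unfolding B_def by auto
    obtain X Y where X: "X < b" and Y: "int m = int b * Y - int a * (int X + 1)"
      using lev_rep[OF cop bpos, of m] by blast
    obtain k where k: "k < a + b" "\<not> w ! k" "k - cN k = X" using col_exists[OF X] by blast
    define c where "c = cN k"
    have lk: "lv k - int a = sqv X c" and lk0: "0 \<le> lv k - int a"
      using E_lv[OF k(1,2)] k(3) c_def by auto
    show "m \<in> \<phi> ` A"
    proof (cases "Y < int c")
      case True
      have "int b * Y = int m + int a * (int X + 1)" using Y by simp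
      moreover have "0 < int a * (int X + 1)" using apos by simp
      ultimately have "0 < int b * Y" by linarith
      hence Y0: "0 < Y" using bpos by (simp add: zero_less_mult_iff)
      define y where "y = nat Y"
      have yc: "y < c" using True Y0 y_def by simp
      have "q ! y + c \<le> k" using E2[of y k] yc c_def by simp
      hence qy: "q ! y \<le> X" using k(3) c_def by simp
      have ya: "y < a" using yc cN_le_a[of k] c_def by simp
      have mv: "int m = sqv X y" unfolding sqv_def using Y Y0 y_def by simp
      have "sqv X y \<noteq> 0" using sqv_zero[OF X, of y] ya by auto
      hence "0 < sqv X y" using mv by simp
      hence "m \<in> ?L" unfolding Lmem using X ya qy mv by (intro exI[of _ X] exI[of _ y]) simp
      thus ?thesis using m(3) by simp
    next
      case False
      define t where "t = nat (Y - int c)"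
      define i where "i = nat (lv k - int a)"
      have iv: "int i = sqv X c" using lk lk0 i_def by simp
      have mi: "int m = int i + int b * int t"
        using iv Y False unfolding t_def sqv_def by (simp add: algebra_simps)
      hence mi': "m = i + b * t" by (metis of_nat_add of_nat_mult of_nat_eq_iff)
      have ih: "i < h" using mi' m(1) by simp
      have iA: "i \<in> A" unfolding A_def using ih k lk lk0 i_def by auto
      have "h - 1 - i = b * t + (h - 1 - m)" using mi' m(1) by simp
      moreover have "h - 1 - m < b" using m(1,2) by simp
      ultimately have "(h - 1 - i) div b = t" using bpos by simp
      hence "\<phi> i = m" unfolding \<phi>_def using mi' by simp
      thus ?thesis using iA by blast
    qed
  qed
  have "\<phi> ` A = B" using into onto by blast
  hence "card A = card B" using card_image[OF inj] by simp
  thus ?thesis using LA B_def by simp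
qed

end

lemma fch_nth_hook: "i < length \<nu> \<Longrightarrow> first_col_hooks \<nu> ! i = hook \<nu> i 0"
  unfolding first_col_hooks_def by simp

context geo begin

theorem main_geo: "rho_tilde_f_tilde a b \<pi> = rho_AHJ a b \<pi> (f_map a b \<pi>)"
proof -
  let ?L = "Lset a b \<pi>"
  let ?E = "east_levels a b \<pi>"
  define \<nu> where "\<nu> = f_map a b \<pi>"
  have z: "0 \<notin> ?L" using L_pos by blast
  have th: "is_partition \<nu> \<and> set (first_col_hooks \<nu>) = ?L"
    unfolding \<nu>_def f_map_def by (rule the_part[OF L_fin z])
  hence p: "is_partition \<nu>" and sL: "set (first_col_hooks \<nu>) = ?L" by auto
  define n where "n = length \<nu>"
  define F where "F h = card {m. m < h \<and> h \<le> m + b \<and> m \<notin> ?L}" for h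
  define H where "H = {h \<in> ?L. int h \<in> ?E}"
  have hH: "{h \<in> I'. zword a b \<pi> h} = H" using H_eq H_def by simp
  define xs where "xs = sorted_list_of_set I'"
  have xs: "sorted xs" "distinct xs" "set xs = I'" using I'_fin xs_def by auto
  have lhs: "rho_tilde_f_tilde a b \<pi> =
      normalize (map (\<lambda>h. card {x \<in> I'. x < h \<and> \<not> zword a b \<pi> x}) (sorted_list_of_set H))"
    unfolding rho_tilde_f_tilde_def yword_def I'_def[symmetric] xs_def[symmetric]
    using ptn_map_sorted[OF xs(1,2), of "zword a b \<pi>"] xs(3) hH by simp
  have rhs: "rho_AHJ a b \<pi> \<nu> = normalize (map (\<lambda>i. card {j. j < \<nu> ! i \<and> hook \<nu> i j \<le> b})
        (filter (\<lambda>i. int (hook \<nu> i 0) \<in> ?E) [0..<n]))"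
    unfolding rho_AHJ_def n_def ..
  have HL: "H \<subseteq> ?L" unfolding H_def by auto
  have finH: "finite H" using L_fin HL finite_subset by blast
  have m1: "mset (map (\<lambda>h. card {x \<in> I'. x < h \<and> \<not> zword a b \<pi> x}) (sorted_list_of_set H))
      = image_mset F (mset_set H)"
  proof -
    have "mset (map (\<lambda>h. card {x \<in> I'. x < h \<and> \<not> zword a b \<pi> x}) (sorted_list_of_set H))
      = image_mset (\<lambda>h. card {x \<in> I'. x < h \<and> \<not> zword a b \<pi> x}) (mset_set H)"
      by (simp add: mset_map msl)
    also have "\<dots> = image_mset F (mset_set H)"
    proof (rule image_mset_cong)
      fix h assume "h \<in># mset_set H"
      hence "h \<in> ?L" using finH HL by auto
      thus "card {x \<in> I'. x < h \<and> \<not> zword a b \<pi> x} = F h"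
        unfolding F_def using bij_count L_pos by blast
    qed
    finally show ?thesis .
  qed
  define X where "X = {i. i < n \<and> int (hook \<nu> i 0) \<in> ?E}"
  have injX: "inj_on (\<lambda>i. hook \<nu> i 0) X"
  proof (rule inj_onI)
    fix i j assume "i \<in> X" "j \<in> X" and e: "hook \<nu> i 0 = hook \<nu> j 0"
    hence ij: "i < n" "j < n" unfolding X_def by auto
    show "i = j"
    proof (rule ccontr)
      assume "i \<noteq> j"
      hence "i < j \<or> j < i" by auto
      thus False using fch_strict[OF p, of i j] fch_strict[OF p, of j i] ij e fch_nth_hook n_def by auto
    qed
  qed
  have imgX: "(\<lambda>i. hook \<nu> i 0) ` X = H"
  proof
    show "(\<lambda>i. hook \<nu> i 0) ` X \<subseteq> H"
    proof
      fix h assume "h \<in> (\<lambda>i. hook \<nu> i 0) ` X"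
      then obtain i where i: "i < n" "int (hook \<nu> i 0) \<in> ?E" "h = hook \<nu> i 0" unfolding X_def by auto
      have "h \<in> set (first_col_hooks \<nu>)" using i fch_nth_hook[of i \<nu>] n_def by (metis fch_len nth_mem)
      thus "h \<in> H" using sL i unfolding H_def by auto
    qed
    show "H \<subseteq> (\<lambda>i. hook \<nu> i 0) ` X"
    proof
      fix h assume hH': "h \<in> H"
      hence "h \<in> set (first_col_hooks \<nu>)" using sL unfolding H_def by auto
      then obtain i where i: "i < n" "h = first_col_hooks \<nu> ! i" using n_def by (auto simp: in_set_conv_nth)
      hence "h = hook \<nu> i 0" using fch_nth_hook n_def by simp
      thus "h \<in> (\<lambda>i. hook \<nu> i 0) ` X" using i hH' unfolding X_def H_def by auto
    qed
  qed
  have m2: "mset (map (\<lambda>i. card {j. j < \<nu> ! i \<and> hook \<nu> i j \<le> b})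
        (filter (\<lambda>i. int (hook \<nu> i 0) \<in> ?E) [0..<n])) = image_mset F (mset_set H)"
  proof -
    have "mset (map (\<lambda>i. card {j. j < \<nu> ! i \<and> hook \<nu> i j \<le> b})
        (filter (\<lambda>i. int (hook \<nu> i 0) \<in> ?E) [0..<n]))
      = image_mset (\<lambda>i. card {j. j < \<nu> ! i \<and> hook \<nu> i j \<le> b}) (mset_set X)"
      unfolding X_def by (rule mset_map_filter_upt)
    also have "\<dots> = image_mset (\<lambda>i. F (hook \<nu> i 0)) (mset_set X)"
    proof (rule image_mset_cong)
      fix i assume "i \<in># mset_set X"
      hence "i < length \<nu>" unfolding X_def n_def by (simp add: X_def)
      thus "card {j. j < \<nu> ! i \<and> hook \<nu> i j \<le> b} = F (hook \<nu> i 0)"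
        unfolding F_def using hook_count[OF p] sL by simp
    qed
    also have "\<dots> = image_mset F (image_mset (\<lambda>i. hook \<nu> i 0) (mset_set X))"
      by (simp add: multiset.map_comp o_def)
    also have "\<dots> = image_mset F (mset_set H)"
      using image_mset_mset_set[OF injX] imgX by simp
    finally show ?thesis .
  qed
  show ?thesis unfolding lhs rhs[unfolded \<nu>_def]
    by (rule normalize_mset) (simp only: m1 m2[unfolded \<nu>_def])
qed

end

theorem mainTheorem8:
  fixes a b :: nat and \<pi> :: "nat list"
  assumes "0 < a" and "0 < b" and "coprime a b"
    and "\<pi> \<in> Dset a b"
  shows "rho_tilde_f_tilde a b \<pi> = rho_AHJ a b \<pi> (f_map a b \<pi>)"
proof -
  interpret geo a b \<pi> using assms by unfold_locales
  show ?thesis by (rule main_geo)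
qed

end
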